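(* The linear operator $\widetilde{\mathcal{V}}:\mathbb{R}^{p\times q}\to\mathbb{R}^{p\times q}$ defined by $$\widetilde{\mathcal{V}}:=\mathcal{I}+\sigma\mathcal{G}+\sigma\mathcal{A}^*_{\mathcal{J}_1}\mathcal{A}_{\mathcal{J}_1}-\sigma^2(\sigma|\mathcal{J}_1|+\rho)^{-1}\mathcal{A}^*_{\mathcal{J}_1}y_{\mathcal{J}_1}y^\top_{\mathcal{J}_1}\mathcal{A}_{\mathcal{J}_1}$$ (where the last two terms are absent if $\mathcal{J}_1=\emptyset$) is self-adjoint and positive definite.
   Context: Data: $X_1,\dots,X_n\in\mathbb{R}^{p\times q}$, $y=(y_1,\dots,y_n)^\top\in\{-1,+1\}^n$, $C>0$, $\tau>0$. $\mathcal{A}W=(\langle y_1X_1,W\rangle,\dots,\langle y_nX_n,W\rangle)^\top$ with $\langle X,Y\rangle=\operatorname{tr}(X^\top Y)$. For $\mathcal{I}'\subseteq\{1,\dots,n\}$, $\mathcal{A}_{\mathcal{I}'}W:=(\mathcal{A}W)_{\mathcal{I}'}$ (the subvector indexed by $\mathcal{I}'$) and $\mathcal{A}^*_{\mathcal{I}'}z:=\sum_{j\in\mathcal{I}'}z_jy_jX_j$; $y_{\mathcal{I}'}$ is the corresponding subvector of $y$. $S=[0,C]^n$, $\mathbb{B}_2^\tau=\{X:\|X\|_2\le\tau\}$ (spectral norm). Fix $\lambda^k\in\mathbb{R}^n$, $\Lambda^k\in\mathbb{R}^{p\times q}$, $\sigma>0$, $\rho\ge0$, and $(\widetilde{W},\widetilde{b})\in\mathbb{R}^{p\times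 q}\times\mathbb{R}$; let $\omega:=-\lambda^k-\sigma(\mathcal{A}\widetilde{W}+\widetilde{b}y-e_n)$ ($e_n$ the all-ones vector) and $\mathcal{J}_1:=\{j: 0<\omega_j<C\}$. $\mathcal{I}$ is the identity on $\mathbb{R}^{p\times q}$ and $\mathcal{G}$ is any element of the Clarke generalized Jacobian $\partial\Pi_{\mathbb{B}_2^\tau}(\Lambda^k+\sigma\widetilde{W})$ of the metric projection onto $\mathbb{B}_2^\tau$. Self-adjointness/positive definiteness are with respect to the trace inner product. *)

theory Defs
  imports "HOL-Analysis.Analysis"
begin

text \<open>p x q real matrices are modelled as real^'q^'p; the inner product of this type
  is sum_ij X_ij Y_ij = tr(X^T Y), and its norm is the Frobenius norm.\<close>

definition spec_norm :: "real^'q^'p \<Rightarrow> real" where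
  "spec_norm X = onorm (\<lambda>v. X *v v)"

definition spec_ball :: "real \<Rightarrow> (real^'q^'p) set" where
  "spec_ball \<tau> = {X. spec_norm X \<le> \<tau>}"

definition proj_spec_ball :: "real \<Rightarrow> real^'q^'p \<Rightarrow> real^'q^'p" where
  "proj_spec_ball \<tau> X = closest_point (spec_ball \<tau>) X"

definition B_jac :: "('a::euclidean_space \<Rightarrow> 'b::euclidean_space) \<Rightarrow> 'a \<Rightarrow> ('a \<Rightarrow>\<^sub>L 'b) set" where
  "B_jac F x = {L. \<exists>s D. (\<forall>k. (F has_derivative blinfun_apply (D k)) (at (s k)))
                        \<and> s \<longlonglongrightarrow> x \<and> D \<longlonglongrightarrow> L}"

definition clarke_jac :: "('a::euclidean_space \<Rightarrow> 'b::euclidean_space) \<Rightarrow> 'a \<Rightarrow> ('a \<Rightarrow>\<^sub>L 'b) set" where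
  "clarke_jac F x = convex hull (B_jac F x)"

text \<open>A W = (<y_i X_i, W>)_i ; indices are 0..n-1.\<close>
definition omega_vec :: "nat \<Rightarrow> (nat \<Rightarrow> real^'q^'p) \<Rightarrow> (nat \<Rightarrow> real) \<Rightarrow> (nat \<Rightarrow> real) \<Rightarrow> real
     \<Rightarrow> real^'q^'p \<Rightarrow> real \<Rightarrow> nat \<Rightarrow> real" where
  "omega_vec n X y lam \<sigma> Wt bt j = - lam j - \<sigma> * (((y j *\<^sub>R X j) \<bullet> Wt) + bt * y j - 1)"

definition J1_set :: "nat \<Rightarrow> (nat \<Rightarrow> real^'q^'p) \<Rightarrow> (nat \<Rightarrow> real) \<Rightarrow> real \<Rightarrow> (nat \<Rightarrow> real) \<Rightarrow> real
     \<Rightarrow> real^'q^'p \<Rightarrow> real \<Rightarrow> nat set" where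
  "J1_set n X y C lam \<sigma> Wt bt =
     {j \<in> {..<n}. 0 < omega_vec n X y lam \<sigma> Wt bt j \<and> omega_vec n X y lam \<sigma> Wt bt j < C}"

definition Vtilde :: "nat set \<Rightarrow> (nat \<Rightarrow> real^'q^'p) \<Rightarrow> (nat \<Rightarrow> real) \<Rightarrow> real \<Rightarrow> real
     \<Rightarrow> ((real^'q^'p) \<Rightarrow>\<^sub>L (real^'q^'p)) \<Rightarrow> real^'q^'p \<Rightarrow> real^'q^'p" where
  "Vtilde J X y \<sigma> \<rho> G W =
     (if J = {} then W + \<sigma> *\<^sub>R blinfun_apply G W
      else W + \<sigma> *\<^sub>R blinfun_apply G W
        + \<sigma> *\<^sub>R (\<Sum>j\<in>J. ((y j *\<^sub>R X j) \<bullet> W) *\<^sub>R (y j *\<^sub>R X j))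
        - (\<sigma>\<^sup>2 / (\<sigma> * real (card J) + \<rho>)) *\<^sub>R
            ((\<Sum>j\<in>J. y j * ((y j *\<^sub>R X j) \<bullet> W)) *\<^sub>R (\<Sum>j\<in>J. y j *\<^sub>R (y j *\<^sub>R X j))))"

end

theory Submission
  imports Defs
begin

lemma proj_H:
  fixes S :: "'a::euclidean_space set"
  assumes "closed S" "S \<noteq> {}"
  defines "P \<equiv> closest_point S"
  shows "(y - x) \<bullet> P x \<le> (y \<bullet> y - (y - P y) \<bullet> (y - P y))/2 - (x \<bullet> x - (x - P x) \<bullet> (x - P x))/2"
proof -
  have "dist y (P y) \<le> dist y (P x)"
    unfolding P_def by (rule closest_point_le[OF assms(1) closest_point_in_set[OF assms(1,2)]])
  hence "norm (y - P y) ^ 2 \<le> norm (y - P x) ^ 2"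
    by (simp add: dist_norm power_mono)
  hence "(y - P y) \<bullet> (y - P y) \<le> (y - P x) \<bullet> (y - P x)"
    by (simp add: power2_norm_eq_inner)
  moreover have "(y \<bullet> y - (y - P y) \<bullet> (y - P y))/2 - (x \<bullet> x - (x - P x) \<bullet> (x - P x))/2 - (y - x) \<bullet> P x
     = ((y - P x) \<bullet> (y - P x) - (y - P y) \<bullet> (y - P y))/2"
    by (simp add: inner_diff_left inner_diff_right inner_commute algebra_simps, simp add: field_simps)
  moreover have "0 \<le> ((y - P x) \<bullet> (y - P x) - (y - P y) \<bullet> (y - P y))/2"
    using calculation(1) by simp
  ultimately show ?thesis by linarith
qed

lemma cell_bounds:
  fixes P :: "'a::real_inner \<Rightarrow> 'a" and f :: "'a \<Rightarrow> real"
  assumes H: "\<And>x y. (y - x) \<bullet> P x \<le> f y - f x"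
  shows "u \<bullet> P (x + k) - u \<bullet> P (x + u) \<le> f (x+u+k) - f (x+k) - f (x+u) + f x"
    and "f (x+u+k) - f (x+k) - f (x+u) + f x \<le> u \<bullet> P (x + u + k) - u \<bullet> P x"
proof -
  have 1: "u \<bullet> P (x + k) \<le> f (x+u+k) - f (x+k)" using H[where x="x+k" and y="x+u+k"] by (simp add: algebra_simps)
  have 2: "- (u \<bullet> P (x + u)) \<le> f x - f (x+u)" using H[where x="x+u" and y="x"] by simp
  have 3: "- (u \<bullet> P (x + u + k)) \<le> f (x+k) - f (x+u+k)" using H[where x="x+u+k" and y="x+k"] by (simp add: algebra_simps)
  have 4: "u \<bullet> P x \<le> f (x+u) - f x" using H[where x="x" and y="x+u"] by simp
  show "u \<bullet> P (x + k) - u \<bullet> P (x + u) \<le> f (x+u+k) - f (x+k) - f (x+u) + f x" using 1 2 by linarith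
  show "f (x+u+k) - f (x+k) - f (x+u) + f x \<le> u \<bullet> P (x + u + k) - u \<bullet> P x" using 3 4 by linarith
qed

lemma err_bound:
  fixes P :: "'a::real_inner \<Rightarrow> 'a"
  assumes L: "bounded_linear L"
    and approx: "\<And>w. norm w \<le> r \<Longrightarrow> norm (P (s+w) - P s - L w) \<le> e * norm w"
    and "norm w0 \<le> R" "norm w1 \<le> R" "R \<le> r" "e \<ge> 0"
  shows "\<bar>u \<bullet> (P (s+w1) - P (s+w0)) - u \<bullet> L (w1 - w0)\<bar> \<le> norm u * (e * (2*R))"
proof -
  have e0: "norm (P (s+w0) - P s - L w0) \<le> e * norm w0" using approx assms by simp
  have e1: "norm (P (s+w1) - P s - L w1) \<le> e * norm w1" using approx assms by simp
  have eq: "u \<bullet> (P (s+w1) - P (s+w0)) - u \<bullet> L (w1 - w0)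
     = u \<bullet> ((P (s+w1) - P s - L w1) - (P (s+w0) - P s - L w0))"
    using linear_diff[OF bounded_linear.linear[OF L]] by (simp add: inner_diff_right)
  have "\<bar>u \<bullet> ((P (s+w1) - P s - L w1) - (P (s+w0) - P s - L w0))\<bar>
      \<le> norm u * norm ((P (s+w1) - P s - L w1) - (P (s+w0) - P s - L w0))"
    by (rule Cauchy_Schwarz_ineq2)
  also have "\<dots> \<le> norm u * (norm (P (s+w1) - P s - L w1) + norm (P (s+w0) - P s - L w0))"
    by (intro mult_left_mono norm_triangle_ineq4) simp
  also have "\<dots> \<le> norm u * (e * norm w1 + e * norm w0)"
    by (intro mult_left_mono add_mono e0 e1) simp
  also have "\<dots> \<le> norm u * (e * (2*R))"
  proof -
    have "e \<ge> 0" using assms by simp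
    hence "e * norm w1 + e * norm w0 \<le> e * (2*R)" using assms
      by (smt (verit) distrib_left mult_left_mono)
    thus ?thesis by (intro mult_left_mono) auto
  qed
  finally show ?thesis using eq by simp
qed

lemma grid_bound:
  fixes P :: "'a::real_inner \<Rightarrow> 'a" and f :: "'a \<Rightarrow> real" and m :: nat
  assumes H: "\<And>x y. (y - x) \<bullet> P x \<le> f y - f x"
    and L: "bounded_linear L" and e: "e \<ge> 0"
    and approx: "\<And>w. norm w \<le> r \<Longrightarrow> norm (P (s+w) - P s - L w) \<le> e * norm w"
    and hk: "norm h + norm k \<le> r" and m: "m > 0"
  shows "\<bar>(f (s+h+k) - f (s+k) - f (s+h) + f s) - h \<bullet> L k\<bar>
           \<le> \<bar>h \<bullet> L h\<bar> / m + 2*e*norm h*(norm h + norm k)"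
proof -
  define a where "a i = s + (real i / real m) *\<^sub>R h" for i
  define u where "u = (1 / real m) *\<^sub>R h"
  define c where "c i = f (a i + u + k) - f (a i + k) - f (a i + u) + f (a i)" for i
  define R where "R = norm h + norm k"
  have mpos: "real m > 0" using m by simp
  have aSuc: "a (Suc i) = a i + u" for i
    unfolding a_def u_def by (simp add: add_divide_distrib scaleR_add_left algebra_simps)
  have a0: "a 0 = s" and am: "a m = s + h" using mpos by (auto simp: a_def)
  have sumc: "(\<Sum>i<m. c i) = f (s+h+k) - f (s+k) - f (s+h) + f s"
  proof -
    have "(\<Sum>i<m. c i) = (\<Sum>i<m. (f (a (Suc i) + k) - f (a (Suc i))) - (f (a i + k) - f (a i)))"
      unfolding c_def aSuc by (simp add: algebra_simps)
    also have "\<dots> = (f (a m + k) - f (a m)) - (f (a 0 + k) - f (a 0))"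
      by (rule sum_lessThan_telescope)
    finally show ?thesis using a0 am by (simp add: algebra_simps)
  qed
  have nu: "norm u = norm h / m" unfolding u_def using mpos by simp
  have cell: "\<bar>c i - h \<bullet> L k / m\<bar> \<le> \<bar>h \<bullet> L h\<bar> / m^2 + norm h / m * (e * (2*R))"
    if "i < m" for i
  proof -
    define w0 where "w0 = (real i / real m) *\<^sub>R h"
    have ai: "a i = s + w0" unfolding a_def w0_def by simp
    have fr: "real i / real m \<le> 1" "real (Suc i) / real m \<le> 1" "0 \<le> real i / real m"
      using that mpos by auto
    have nw0: "norm w0 \<le> norm h"
    proof -
      have "norm w0 = (real i / real m) * norm h" unfolding w0_def using fr by simp
      thus ?thesis using fr mult_left_le_one_le[of "norm h" "real i / real m"] by simp
    qed
    have w0u: "w0 + u = (real (Suc i) / real m) *\<^sub>R h"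
      unfolding w0_def u_def by (simp add: add_divide_distrib scaleR_add_left algebra_simps)
    have nw0u: "norm (w0 + u) \<le> norm h"
    proof -
      have "norm (w0 + u) = (real (Suc i) / real m) * norm h" unfolding w0u using fr
        by (simp del: of_nat_Suc)
      thus ?thesis using fr mult_left_le_one_le[of "norm h" "real (Suc i) / real m"] by simp
    qed
    have R1: "norm h \<le> R" "norm (w0 + k) \<le> R" "norm (w0 + u + k) \<le> R" "R \<le> r"
      using nw0 nw0u norm_triangle_ineq[of w0 k] norm_triangle_ineq[of "w0+u" k] hk
      by (auto simp: R_def)
    have lin: "linear L" using L by (rule bounded_linear.linear)
    have Lu: "u \<bullet> L u = h \<bullet> L h / m^2" "u \<bullet> L k = h \<bullet> L k / m"
      unfolding u_def using linear_scale[OF lin] by (auto simp: power2_eq_square)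
    have cb1: "u \<bullet> P (a i + k) - u \<bullet> P (a i + u) \<le> c i"
      and cb2: "c i \<le> u \<bullet> P (a i + u + k) - u \<bullet> P (a i)"
      using cell_bounds[where P=P and f=f and u=u and x="a i" and k=k, OF H] unfolding c_def by auto
    have E1: "\<bar>u \<bullet> (P (s+(w0+u+k)) - P (s+w0)) - u \<bullet> L ((w0+u+k) - w0)\<bar> \<le> norm u * (e * (2*R))"
      by (rule err_bound[OF L approx]) (use R1 nw0 e in auto)
    have E2: "\<bar>u \<bullet> (P (s+(w0+k)) - P (s+(w0+u))) - u \<bullet> L ((w0+k) - (w0+u))\<bar> \<le> norm u * (e * (2*R))"
      by (rule err_bound[OF L approx]) (use R1 nw0u e in auto)
    have L1: "u \<bullet> L ((w0+u+k) - w0) = h \<bullet> L h / m^2 + h \<bullet> L k / m"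
      using Lu linear_add[OF lin, of u k] by (simp add: inner_add_right)
    have L2: "u \<bullet> L ((w0+k) - (w0+u)) = h \<bullet> L k / m - h \<bullet> L h / m^2"
      using Lu linear_diff[OF lin, of k u] by (simp add: inner_diff_right)
    have P1: "u \<bullet> (P (s+(w0+u+k)) - P (s+w0)) = u \<bullet> P (a i + u + k) - u \<bullet> P (a i)"
      by (simp add: ai inner_diff_right add.assoc)
    have P2: "u \<bullet> (P (s+(w0+k)) - P (s+(w0+u))) = u \<bullet> P (a i + k) - u \<bullet> P (a i + u)"
      by (simp add: ai inner_diff_right add.assoc)
    have ab: "\<bar>h \<bullet> L h / real (m^2)\<bar> = \<bar>h \<bullet> L h\<bar> / real (m^2)" by simp
    show ?thesis using cb1 cb2 E1 E2 L1 L2 P1 P2 nu ab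
      by (smt (verit))
  qed
  have "\<bar>(\<Sum>i<m. c i) - h \<bullet> L k\<bar> = \<bar>\<Sum>i<m. (c i - h \<bullet> L k / m)\<bar>"
    using mpos by (simp add: sum_subtractf)
  also have "\<dots> \<le> (\<Sum>i<m. \<bar>c i - h \<bullet> L k / m\<bar>)" by (rule sum_abs)
  also have "\<dots> \<le> (\<Sum>i<m. \<bar>h \<bullet> L h\<bar> / m^2 + norm h / m * (e * (2*R)))"
    by (rule sum_mono) (use cell in auto)
  also have "\<dots> = \<bar>h \<bullet> L h\<bar> / m + 2*e*norm h*(norm h + norm k)"
    using mpos by (simp add: R_def power2_eq_square field_simps)
  finally show ?thesis using sumc by simp
qed

lemma deriv_approx:
  fixes P :: "'a::real_normed_vector \<Rightarrow> 'b::real_normed_vector"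
  assumes d: "(P has_derivative L) (at s)" and e: "e > 0"
  obtains r where "r > 0" "\<And>w. norm w \<le> r \<Longrightarrow> norm (P (s+w) - P s - L w) \<le> e * norm w"
proof -
  obtain d where d0: "d > 0" and dd: "\<And>y. norm (y - s) < d \<Longrightarrow> norm (P y - P s - L (y - s)) \<le> e * norm (y - s)"
    using d e unfolding has_derivative_at_alt by blast
  show ?thesis
  proof (rule that[of "d/2"])
    show "d/2 > 0" using d0 by simp
    fix w :: 'a assume "norm w \<le> d/2"
    hence "norm ((s + w) - s) < d" using d0 by simp
    from dd[OF this] show "norm (P (s+w) - P s - L w) \<le> e * norm w" by simp
  qed
qed

lemma deriv_sym_aux:
  fixes P :: "'a::real_inner \<Rightarrow> 'a" and f :: "'a \<Rightarrow> real" and m :: nat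
  assumes H: "\<And>x y. (y - x) \<bullet> P x \<le> f y - f x"
    and d: "(P has_derivative L) (at s)" and e: "e > 0" and m: "m > 0"
  shows "\<bar>h \<bullet> L k - k \<bullet> L h\<bar> \<le> (\<bar>h \<bullet> L h\<bar> + \<bar>k \<bullet> L k\<bar>) / m + 4*e*(norm h + norm k)^2"
proof -
  have L: "bounded_linear L" using d unfolding has_derivative_at_alt by blast
  have lin: "linear L" using L by (rule bounded_linear.linear)
  obtain r where r0: "r > 0" and approx: "\<And>w. norm w \<le> r \<Longrightarrow> norm (P (s+w) - P s - L w) \<le> e * norm w"
    using deriv_approx[OF d e] by blast
  define t where "t = r / (norm h + norm k + 1)"
  have t0: "t > 0" unfolding t_def using r0 by (simp add: add_nonneg_pos)
  have "t * (norm h + norm k) \<le> r"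
  proof -
    have "t * (norm h + norm k) \<le> t * (norm h + norm k + 1)" using t0 by simp
    also have "\<dots> = r" unfolding t_def
      using add_nonneg_pos[OF add_nonneg_nonneg[OF norm_ge_zero norm_ge_zero] zero_less_one, of h k] by simp
    finally show ?thesis .
  qed
  hence hk: "norm (t *\<^sub>R h) + norm (t *\<^sub>R k) \<le> r" "norm (t *\<^sub>R k) + norm (t *\<^sub>R h) \<le> r"
    using t0 by (simp_all add: algebra_simps)
  have e0: "e \<ge> 0" using e by simp
  have g1: "\<bar>(f (s + t *\<^sub>R h + t *\<^sub>R k) - f (s + t *\<^sub>R k) - f (s + t *\<^sub>R h) + f s) - (t *\<^sub>R h) \<bullet> L (t *\<^sub>R k)\<bar>
     \<le> \<bar>(t *\<^sub>R h) \<bullet> L (t *\<^sub>R h)\<bar> / m + 2*e*norm (t *\<^sub>R h)*(norm (t *\<^sub>R h) + norm (t *\<^sub>R k))"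
    by (rule grid_bound[OF H L e0 approx hk(1) m])
  have g2: "\<bar>(f (s + t *\<^sub>R k + t *\<^sub>R h) - f (s + t *\<^sub>R h) - f (s + t *\<^sub>R k) + f s) - (t *\<^sub>R k) \<bullet> L (t *\<^sub>R h)\<bar>
     \<le> \<bar>(t *\<^sub>R k) \<bullet> L (t *\<^sub>R k)\<bar> / m + 2*e*norm (t *\<^sub>R k)*(norm (t *\<^sub>R k) + norm (t *\<^sub>R h))"
    by (rule grid_bound[OF H L e0 approx hk(2) m])
  have sw: "s + t *\<^sub>R k + t *\<^sub>R h = s + t *\<^sub>R h + t *\<^sub>R k" by (simp add: algebra_simps)
  have sc: "(t *\<^sub>R a) \<bullet> L (t *\<^sub>R b) = t^2 * (a \<bullet> L b)" for a b
    using linear_scale[OF lin] by (simp add: power2_eq_square)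
  have nt: "norm (t *\<^sub>R a) = t * norm a" for a :: 'a using t0 by simp
  define Q where "Q = \<bar>h \<bullet> L h\<bar>"
  define R where "R = \<bar>k \<bullet> L k\<bar>"
  define N where "N = norm h + norm k"
  define D where "D = f (s + t *\<^sub>R h + t *\<^sub>R k) - f (s + t *\<^sub>R k) - f (s + t *\<^sub>R h) + f s"
  have tt: "\<bar>t^2 * x\<bar> = t^2 * \<bar>x\<bar>" for x by (simp add: abs_mult)
  have a1: "\<bar>D - t^2 * (h \<bullet> L k)\<bar> \<le> t^2 * Q / m + 2*e*(t * norm h)*(t * norm h + t * norm k)"
    using g1 unfolding D_def sc nt Q_def tt .
  have a2: "\<bar>D - t^2 * (k \<bullet> L h)\<bar> \<le> t^2 * R / m + 2*e*(t * norm k)*(t * norm k + t * norm h)"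
    using g2 unfolding D_def sc nt R_def tt sw by (simp add: algebra_simps)
  have "t^2 * \<bar>h \<bullet> L k - k \<bullet> L h\<bar> = \<bar>(D - t^2 * (k \<bullet> L h)) - (D - t^2 * (h \<bullet> L k))\<bar>"
    by (simp add: tt[symmetric] algebra_simps)
  also have "\<dots> \<le> t^2 * Q / m + 2*e*(t * norm h)*(t * norm h + t * norm k) + (t^2 * R / m + 2*e*(t * norm k)*(t * norm k + t * norm h))"
    using a1 a2 abs_triangle_ineq4[of "D - t^2 * (k \<bullet> L h)" "D - t^2 * (h \<bullet> L k)"] by linarith
  also have "\<dots> \<le> t^2 * Q / m + t^2 * R / m + 2*e*(t * norm h)*(t * N) + 2*e*(t * norm k)*(t*N)"
    by (simp add: N_def algebra_simps)
  also have "\<dots> = t^2 * ((Q + R) / m + 2*e*N^2)"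
    by (simp add: N_def power2_eq_square field_simps add_divide_distrib)
  finally have "\<bar>h \<bullet> L k - k \<bullet> L h\<bar> \<le> (Q + R) / m + 2*e*N^2"
    using t0 by simp
  moreover have "2*e*N^2 \<le> 4*e*N^2" using e by simp
  ultimately show ?thesis unfolding Q_def R_def N_def by linarith
qed

lemma deriv_sym:
  fixes P :: "'a::real_inner \<Rightarrow> 'a" and f :: "'a \<Rightarrow> real"
  assumes H: "\<And>x y. (y - x) \<bullet> P x \<le> f y - f x"
    and d: "(P has_derivative L) (at s)"
  shows "h \<bullet> L k = k \<bullet> L h"
proof (rule ccontr)
  assume ne: "h \<bullet> L k \<noteq> k \<bullet> L h"
  define D where "D = \<bar>h \<bullet> L k - k \<bullet> L h\<bar>"
  define Q where "Q = \<bar>h \<bullet> L h\<bar> + \<bar>k \<bullet> L k\<bar>"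
  define N where "N = (norm h + norm k)^2"
  have D0: "D > 0" using ne by (simp add: D_def)
  obtain m :: nat where m: "2 * Q / D < m" using reals_Archimedean2 by blast
  have Q0: "Q \<ge> 0" by (simp add: Q_def)
  have m0: "m > 0" using m Q0 D0
    by (metis divide_nonneg_pos linorder_not_less mult_nonneg_nonneg of_nat_0_less_iff order_less_le_trans zero_le_numeral)
  define e where "e = D / (8 * (N + 1))"
  have N0: "N \<ge> 0" by (simp add: N_def)
  have e0: "e > 0" using D0 N0 by (simp add: e_def)
  have b: "D \<le> Q / m + 4*e*N"
    using deriv_sym_aux[OF H d e0 m0, of h k] by (simp add: D_def Q_def N_def)
  have "Q / m < D / 2" using m D0 m0 by (simp add: field_simps)
  moreover have "4*e*N < D / 2"
  proof -
    have "4*e*N = D * N / (2 * (N + 1))" using N0 by (simp add: e_def field_simps)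
    also have "\<dots> < D / 2" using D0 N0 by (simp add: field_simps)
    finally show ?thesis .
  qed
  ultimately show False using b by linarith
qed

lemma deriv_psd:
  fixes P :: "'a::real_inner \<Rightarrow> 'a" and f :: "'a \<Rightarrow> real"
  assumes H: "\<And>x y. (y - x) \<bullet> P x \<le> f y - f x"
    and d: "(P has_derivative L) (at s)"
  shows "L h \<bullet> h \<ge> 0"
proof -
  have L: "bounded_linear L" using d unfolding has_derivative_at_alt by blast
  have lin: "linear L" using L by (rule bounded_linear.linear)
  have mono: "(y - x) \<bullet> (P y - P x) \<ge> 0" for x y
    using H[of x y] H[of y x] by (simp add: inner_diff_right inner_diff_left algebra_simps)
  have lb: "h \<bullet> L h \<ge> - e * (norm h)^2" if e: "e > 0" for e
  proof -
    obtain r where r0: "r > 0" and approx: "\<And>w. norm w \<le> r \<Longrightarrow> norm (P (s+w) - P s - L w) \<le> e * norm w"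
      using deriv_approx[OF d e] by blast
    define t where "t = r / (norm h + 1)"
    have t0: "t > 0" unfolding t_def using r0 by (simp add: add_nonneg_pos)
    have "t * norm h \<le> r"
    proof -
      have "t * norm h \<le> t * (norm h + 1)" using t0 by simp
      also have "\<dots> = r" unfolding t_def
        using add_nonneg_pos[OF norm_ge_zero zero_less_one, of h] by simp
      finally show ?thesis .
    qed
    hence ap: "norm (P (s + t *\<^sub>R h) - P s - L (t *\<^sub>R h)) \<le> e * (t * norm h)"
      using approx[of "t *\<^sub>R h"] t0 by simp
    have m1: "(t *\<^sub>R h) \<bullet> (P (s + t *\<^sub>R h) - P s) \<ge> 0" using mono[of s "s + t *\<^sub>R h"] by (simp add: inner_diff_right right_diff_distrib)
    have cs: "\<bar>(t *\<^sub>R h) \<bullet> (P (s + t *\<^sub>R h) - P s - L (t *\<^sub>R h))\<bar> \<le> (t * norm h) * (e * (t * norm h))"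
    proof -
      have "\<bar>(t *\<^sub>R h) \<bullet> (P (s + t *\<^sub>R h) - P s - L (t *\<^sub>R h))\<bar> \<le> norm (t *\<^sub>R h) * norm (P (s + t *\<^sub>R h) - P s - L (t *\<^sub>R h))"
        by (rule Cauchy_Schwarz_ineq2)
      also have "\<dots> \<le> (t * norm h) * (e * (t * norm h))"
        using t0 ap by (simp add: mult_left_mono)
      finally show ?thesis .
    qed
    have eq: "(t *\<^sub>R h) \<bullet> L (t *\<^sub>R h) = t^2 * (h \<bullet> L h)"
      using linear_scale[OF lin] by (simp add: power2_eq_square)
    have "(t *\<^sub>R h) \<bullet> (P (s + t *\<^sub>R h) - P s - L (t *\<^sub>R h)) = (t *\<^sub>R h) \<bullet> (P (s + t *\<^sub>R h) - P s) - t^2 * (h \<bullet> L h)"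
      using eq by (simp add: inner_diff_right)
    hence "\<bar>(t *\<^sub>R h) \<bullet> (P (s + t *\<^sub>R h) - P s) - t^2 * (h \<bullet> L h)\<bar> \<le> (t * norm h) * (e * (t * norm h))"
      using cs by simp
    hence "t^2 * (h \<bullet> L h) \<ge> - ((t * norm h) * (e * (t * norm h)))"
      using m1 by linarith
    moreover have "(t * norm h) * (e * (t * norm h)) = t^2 * (e * (norm h)^2)"
      by (simp add: power2_eq_square)
    ultimately have "t^2 * (h \<bullet> L h) \<ge> - (t^2 * (e * (norm h)^2))" by simp
    hence "t^2 * (- e * (norm h)^2) \<le> t^2 * (h \<bullet> L h)" by simp
    moreover have "t^2 > 0" using t0 by simp
    ultimately show ?thesis using mult_le_cancel_left_pos by blast
  qed
  have "h \<bullet> L h \<ge> 0"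
  proof (rule ccontr)
    assume neg: "\<not> h \<bullet> L h \<ge> 0"
    define e where "e = - (h \<bullet> L h) / (2 * ((norm h)^2 + 1))"
    have n0: "(norm h)^2 \<ge> 0" by simp
    have e0: "e > 0" unfolding e_def by (intro divide_pos_pos) (use neg n0 in \<open>auto intro: add_nonneg_pos\<close>)
    have "e * (norm h)^2 = - (h \<bullet> L h) * ((norm h)^2 / (2 * ((norm h)^2 + 1)))"
      unfolding e_def by simp
    also have "\<dots> < - (h \<bullet> L h)"
    proof -
      have d: "2 * ((norm h)^2 + 1) > 0" using n0 by (intro mult_pos_pos add_nonneg_pos) auto
      have "(norm h)^2 < 2 * ((norm h)^2 + 1)" using n0 by (simp add: algebra_simps add_pos_nonneg)
      hence "(norm h)^2 / (2 * ((norm h)^2 + 1)) < 1" using divide_less_eq_1_pos[OF d] by blast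
      moreover have a0: "- (h \<bullet> L h) > 0" using neg by simp
      ultimately have "- (h \<bullet> L h) * ((norm h)^2 / (2 * ((norm h)^2 + 1))) < - (h \<bullet> L h) * 1"
        by (rule mult_strict_left_mono)
      thus ?thesis by (simp only: mult_1_right)
    qed
    finally have "e * (norm h)^2 < - (h \<bullet> L h)" .
    moreover have "h \<bullet> L h \<ge> - e * (norm h)^2" by (rule lb[OF e0])
    ultimately show False by simp
  qed
  thus ?thesis by (simp add: inner_commute)
qed

definition good_op :: "('a::euclidean_space \<Rightarrow>\<^sub>L 'a) set" where
  "good_op = {L. (\<forall>U W. blinfun_apply L U \<bullet> W = U \<bullet> blinfun_apply L W) \<and> (\<forall>W. blinfun_apply L W \<bullet> W \<ge> 0)}"

lemma convex_good_op: "convex good_op"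
  unfolding convex_def good_op_def
  by (auto simp: plus_blinfun.rep_eq scaleR_blinfun.rep_eq inner_add_left inner_add_right
      intro!: add_nonneg_nonneg mult_nonneg_nonneg)

lemma B_jac_good:
  fixes S :: "'a::euclidean_space set"
  assumes "closed S" "S \<noteq> {}"
  shows "B_jac (closest_point S) x \<subseteq> good_op"
proof
  fix L assume "L \<in> B_jac (closest_point S) x"
  then obtain s D where der: "\<And>k. (closest_point S has_derivative blinfun_apply (D k)) (at (s k))"
    and lim: "D \<longlonglongrightarrow> L" unfolding B_jac_def by blast
  define f where "f x = (x \<bullet> x - (x - closest_point S x) \<bullet> (x - closest_point S x))/2" for x
  have H: "\<And>x y. (y - x) \<bullet> closest_point S x \<le> f y - f x"
    unfolding f_def by (rule proj_H[OF assms])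
  have sym: "blinfun_apply (D k) U \<bullet> W = U \<bullet> blinfun_apply (D k) W" for k U W
    using deriv_sym[OF H der, where h=W and k=U] by (simp add: inner_commute)
  have psd: "blinfun_apply (D k) W \<bullet> W \<ge> 0" for k W
    by (rule deriv_psd[OF H der])
  have tl: "(\<lambda>k. blinfun_apply (D k) U) \<longlonglongrightarrow> blinfun_apply L U" for U
    by (rule blinfun.tendsto[OF lim tendsto_const])
  have "blinfun_apply L U \<bullet> W = U \<bullet> blinfun_apply L W" for U W
  proof -
    have 1: "(\<lambda>k. blinfun_apply (D k) U \<bullet> W) \<longlonglongrightarrow> blinfun_apply L U \<bullet> W"
      by (intro tendsto_intros tl)
    have 2: "(\<lambda>k. blinfun_apply (D k) U \<bullet> W) \<longlonglongrightarrow> U \<bullet> blinfun_apply L W"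
      unfolding sym by (intro tendsto_intros tl)
    show ?thesis using LIMSEQ_unique[OF 1 2] .
  qed
  moreover have "blinfun_apply L W \<bullet> W \<ge> 0" for W
  proof -
    have 1: "(\<lambda>k. blinfun_apply (D k) W \<bullet> W) \<longlonglongrightarrow> blinfun_apply L W \<bullet> W"
      by (intro tendsto_intros tl)
    show ?thesis by (rule tendsto_lowerbound[OF 1]) (auto simp: psd)
  qed
  ultimately show "L \<in> good_op" unfolding good_op_def by blast
qed

lemma clarke_good:
  fixes S :: "'a::euclidean_space set"
  assumes "closed S" "S \<noteq> {}" "G \<in> clarke_jac (closest_point S) x"
  shows "G \<in> good_op"
  using hull_minimal[where S=convex, OF B_jac_good[OF assms(1,2)] convex_good_op] assms(3)
  unfolding clarke_jac_def by blast

lemma linear_mv: "linear (\<lambda>X::real^'q^'p. X *v v)"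
  by (auto simp: linear_iff matrix_vector_mult_def vec_eq_iff sum.distrib algebra_simps sum_distrib_left)

lemma spec_ball_eq:
  assumes "\<tau> \<ge> 0"
  shows "spec_ball \<tau> = {X::real^'q^'p. \<forall>v. norm (X *v v) \<le> \<tau> * norm v}"
proof (intro set_eqI iffI)
  fix X :: "real^'q^'p"
  assume "X \<in> spec_ball \<tau>"
  hence o: "onorm ((*v) X) \<le> \<tau>" unfolding spec_ball_def spec_norm_def by simp
  show "X \<in> {X. \<forall>v. norm (X *v v) \<le> \<tau> * norm v}"
  proof (clarify)
    fix v
    have "norm (X *v v) \<le> onorm ((*v) X) * norm v" by (rule onorm) simp
    also have "\<dots> \<le> \<tau> * norm v" using o by (simp add: mult_right_mono)
    finally show "norm (X *v v) \<le> \<tau> * norm v" .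
  qed
next
  fix X :: "real^'q^'p"
  assume "X \<in> {X. \<forall>v. norm (X *v v) \<le> \<tau> * norm v}"
  hence "onorm (\<lambda>v. X *v v) \<le> \<tau>" by (intro onorm_le) auto
  thus "X \<in> spec_ball \<tau>" unfolding spec_ball_def spec_norm_def by simp
qed

lemma spec_ball_closed:
  assumes "\<tau> \<ge> 0"
  shows "closed (spec_ball \<tau> :: (real^'q^'p) set)"
proof -
  have "spec_ball \<tau> = (\<Inter>v. {X::real^'q^'p. norm (X *v v) \<le> \<tau> * norm v})"
    using spec_ball_eq[OF assms] by auto
  moreover have "closed {X::real^'q^'p. norm (X *v v) \<le> \<tau> * norm v}" for v
  proof -
    have "continuous_on UNIV (\<lambda>X::real^'q^'p. X *v v)"
      using linear_mv linear_continuous_on linear_conv_bounded_linear by blast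
    hence "continuous_on UNIV (\<lambda>X::real^'q^'p. norm (X *v v))"
      by (intro continuous_intros)
    thus ?thesis by (intro closed_Collect_le) (auto intro!: continuous_intros)
  qed
  ultimately show ?thesis by auto
qed

lemma spec_ball_ne:
  assumes "\<tau> \<ge> 0"
  shows "(spec_ball \<tau> :: (real^'q^'p) set) \<noteq> {}"
proof -
  have "(0::real^'q^'p) \<in> {X. \<forall>v. norm (X *v v) \<le> \<tau> * norm v}" using assms
    by (simp add: matrix_vector_mult_def zero_vec_def[symmetric])
  hence "(0::real^'q^'p) \<in> spec_ball \<tau>" unfolding spec_ball_eq[OF assms] .
  thus ?thesis by blast
qed

lemma Vtilde_inner:
  assumes "J \<noteq> {}"
  shows "Vtilde J X y \<sigma> \<rho> G U \<bullet> W = U \<bullet> W + \<sigma> * (blinfun_apply G U \<bullet> W)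
     + \<sigma> * (\<Sum>j\<in>J. ((y j *\<^sub>R X j) \<bullet> U) * ((y j *\<^sub>R X j) \<bullet> W))
     - (\<sigma>\<^sup>2 / (\<sigma> * real (card J) + \<rho>)) * ((\<Sum>j\<in>J. y j * ((y j *\<^sub>R X j) \<bullet> U)) * (\<Sum>j\<in>J. y j * ((y j *\<^sub>R X j) \<bullet> W)))"
  using assms unfolding Vtilde_def
  by (simp add: inner_add_left inner_diff_left inner_sum_left mult.assoc)

theorem proposition3:
  fixes n :: nat and X :: "nat \<Rightarrow> real^'q^'p" and y :: "nat \<Rightarrow> real"
    and C \<tau> \<sigma> \<rho> bt :: real and lam :: "nat \<Rightarrow> real"
    and Lam Wt :: "real^'q^'p" and G :: "(real^'q^'p) \<Rightarrow>\<^sub>L (real^'q^'p)"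
  assumes "\<forall>i<n. y i = -1 \<or> y i = 1"
    and "C > 0" and "\<tau> > 0" and "\<sigma> > 0" and "\<rho> \<ge> 0"
    and "G \<in> clarke_jac (proj_spec_ball \<tau>) (Lam + \<sigma> *\<^sub>R Wt)"
  shows "(\<forall>U W. Vtilde (J1_set n X y C lam \<sigma> Wt bt) X y \<sigma> \<rho> G U \<bullet> W
               = U \<bullet> Vtilde (J1_set n X y C lam \<sigma> Wt bt) X y \<sigma> \<rho> G W)
       \<and> (\<forall>W. W \<noteq> 0 \<longrightarrow> Vtilde (J1_set n X y C lam \<sigma> Wt bt) X y \<sigma> \<rho> G W \<bullet> W > 0)"
proof -
  define J where "J = J1_set n X y C lam \<sigma> Wt bt"
  have t0: "\<tau> \<ge> 0" using assms by simp
  have pe: "proj_spec_ball \<tau> = closest_point (spec_ball \<tau>)"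
    by (rule ext) (simp add: proj_spec_ball_def)
  have Gg: "G \<in> good_op"
    using clarke_good[OF spec_ball_closed[OF t0] spec_ball_ne[OF t0]] assms(6) unfolding pe by blast
  hence Gs: "blinfun_apply G U \<bullet> W = U \<bullet> blinfun_apply G W" and Gp: "blinfun_apply G W \<bullet> W \<ge> 0" for U W
    unfolding good_op_def by auto
  have Jsub: "J \<subseteq> {..<n}" unfolding J_def J1_set_def by auto
  have fJ: "finite J" using Jsub finite_subset by blast
  have y2: "(y j)^2 = 1" if "j \<in> J" for j using assms(1) Jsub that by auto
  define a where "a j W = (y j *\<^sub>R X j) \<bullet> W" for j W
  show ?thesis
  proof (cases "J = {}")
    case True
    have V: "Vtilde J X y \<sigma> \<rho> G U = U + \<sigma> *\<^sub>R blinfun_apply G U" for U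
      using True unfolding Vtilde_def by simp
    show ?thesis unfolding J_def[symmetric] V
    proof (intro conjI allI impI)
      fix U W :: "real^'q^'p"
      show "(U + \<sigma> *\<^sub>R blinfun_apply G U) \<bullet> W = U \<bullet> (W + \<sigma> *\<^sub>R blinfun_apply G W)"
        using Gs[of U W] by (simp add: inner_add_left inner_add_right inner_commute)
    next
      fix W :: "real^'q^'p" assume "W \<noteq> 0"
      hence "W \<bullet> W > 0" by simp
      thus "(W + \<sigma> *\<^sub>R blinfun_apply G W) \<bullet> W > 0"
        using Gp[of W] assms(4) by (simp add: inner_add_left add_pos_nonneg)
    qed
  next
    case False
    define c where "c = real (card J)"
    have c0: "c > 0" unfolding c_def using False fJ by (simp add: card_gt_0_iff)
    define \<kappa> where "\<kappa> = \<sigma>\<^sup>2 / (\<sigma> * c + \<rho>)"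
    have den: "\<sigma> * c + \<rho> > 0" using c0 assms(4,5) by (simp add: add_pos_nonneg)
    have k0: "\<kappa> \<ge> 0" unfolding \<kappa>_def using den by simp
    have kc: "\<kappa> * c \<le> \<sigma>"
    proof -
      have "\<kappa> * c = \<sigma> * (\<sigma> * c / (\<sigma> * c + \<rho>))" unfolding \<kappa>_def by (simp add: power2_eq_square)
      also have "\<dots> \<le> \<sigma> * 1" using den assms(4,5) by (intro mult_left_mono) auto
      finally show ?thesis by simp
    qed
    have VI: "Vtilde J X y \<sigma> \<rho> G U \<bullet> W = U \<bullet> W + \<sigma> * (blinfun_apply G U \<bullet> W)
       + \<sigma> * (\<Sum>j\<in>J. a j U * a j W) - \<kappa> * ((\<Sum>j\<in>J. y j * a j U) * (\<Sum>j\<in>J. y j * a j W))" for U W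
      unfolding Vtilde_inner[OF False] a_def \<kappa>_def c_def ..
    show ?thesis unfolding J_def[symmetric]
    proof (intro conjI allI impI)
      fix U W :: "real^'q^'p"
      have "U \<bullet> Vtilde J X y \<sigma> \<rho> G W = Vtilde J X y \<sigma> \<rho> G W \<bullet> U" by (simp add: inner_commute)
      thus "Vtilde J X y \<sigma> \<rho> G U \<bullet> W = U \<bullet> Vtilde J X y \<sigma> \<rho> G W"
        unfolding VI using Gs[of U W] Gs[of W U]
        by (simp add: inner_commute mult.commute)
    next
      fix W :: "real^'q^'p" assume "W \<noteq> 0"
      hence WW: "W \<bullet> W > 0" by simp
      have CS: "(\<Sum>j\<in>J. y j * a j W)\<^sup>2 \<le> (\<Sum>j\<in>J. (y j)\<^sup>2) * (\<Sum>j\<in>J. (a j W)\<^sup>2)"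
        by (rule Cauchy_Schwarz_ineq_sum)
      have sy: "(\<Sum>j\<in>J. (y j)\<^sup>2) = c" unfolding c_def using y2 by simp
      have "\<kappa> * ((\<Sum>j\<in>J. y j * a j W) * (\<Sum>j\<in>J. y j * a j W)) \<le> \<kappa> * (c * (\<Sum>j\<in>J. (a j W)\<^sup>2))"
        using CS sy k0 by (intro mult_left_mono) (auto simp: power2_eq_square)
      also have "\<dots> = (\<kappa> * c) * (\<Sum>j\<in>J. (a j W)\<^sup>2)" by simp
      also have "\<dots> \<le> \<sigma> * (\<Sum>j\<in>J. (a j W)\<^sup>2)"
        using kc by (intro mult_right_mono sum_nonneg) auto
      finally have q: "\<kappa> * ((\<Sum>j\<in>J. y j * a j W) * (\<Sum>j\<in>J. y j * a j W)) \<le> \<sigma> * (\<Sum>j\<in>J. a j W * a j W)"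
        by (simp add: power2_eq_square)
      have "\<sigma> * (blinfun_apply G W \<bullet> W) \<ge> 0" using Gp[of W] assms(4) by simp
      thus "Vtilde J X y \<sigma> \<rho> G W \<bullet> W > 0" unfolding VI using WW q by linarith
    qed
  qed
qed

end
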